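(* Let $S$ be an $E$-solid locally inverse semigroup and $\rho$ an inverse semigroup congruence on $S$ such that every idempotent $\rho$-class is a completely simple subsemigroup of $S$; put $T=S/\rho$. For every $\alpha,\beta\in T$ with $\alpha\ge\beta$ (natural partial order of $T$) and every $s\in\alpha$ (viewing $\alpha$ as a $\rho$-class), there exists a unique $t\in\beta$ such that $s\ge t$ in the natural partial order of $S$.
   Context: A semigroup is locally inverse if it is regular and every local submonoid $eSe$ ($e$ idempotent) is inverse; $E$-solid means the subsemigroup generated by the idempotents is completely regular. The natural partial order on a regular semigroup: $s\le t$ iff $s=et=tf$ for some idempotents $e,f$. *)

theory Defs
  imports Main
begin

text \<open>Semigroup notions, stated generically for a carrier set A with a binary
operation mult (used both for S = UNIV with (*) and for the quotient S/rho).\<close>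

definition idem_in :: "('b \<Rightarrow> 'b \<Rightarrow> 'b) \<Rightarrow> 'b set \<Rightarrow> 'b \<Rightarrow> bool" where
  "idem_in mult A e \<longleftrightarrow> e \<in> A \<and> mult e e = e"

definition closed_in :: "('b \<Rightarrow> 'b \<Rightarrow> 'b) \<Rightarrow> 'b set \<Rightarrow> bool" where
  "closed_in mult A \<longleftrightarrow> (\<forall>a\<in>A. \<forall>b\<in>A. mult a b \<in> A)"

definition npo :: "('b \<Rightarrow> 'b \<Rightarrow> 'b) \<Rightarrow> 'b set \<Rightarrow> 'b \<Rightarrow> 'b \<Rightarrow> bool" where
  "npo mult A t s \<longleftrightarrow> (\<exists>e f. idem_in mult A e \<and> idem_in mult A f \<and> t = mult e s \<and> t = mult s f)"

definition regular_on :: "('b \<Rightarrow> 'b \<Rightarrow> 'b) \<Rightarrow> 'b set \<Rightarrow> bool" where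
  "regular_on mult A \<longleftrightarrow> (\<forall>a\<in>A. \<exists>x\<in>A. mult (mult a x) a = a)"

definition inverse_on :: "('b \<Rightarrow> 'b \<Rightarrow> 'b) \<Rightarrow> 'b set \<Rightarrow> bool" where
  "inverse_on mult A \<longleftrightarrow>
     (\<forall>a\<in>A. \<exists>!x. x \<in> A \<and> mult (mult a x) a = a \<and> mult (mult x a) x = x)"

definition subgroup_in :: "('b \<Rightarrow> 'b \<Rightarrow> 'b) \<Rightarrow> 'b set \<Rightarrow> bool" where
  "subgroup_in mult G \<longleftrightarrow> closed_in mult G \<and>
     (\<exists>u\<in>G. \<forall>g\<in>G. mult u g = g \<and> mult g u = g \<and> (\<exists>h\<in>G. mult g h = u \<and> mult h g = u))"

definition completely_regular_on :: "('b \<Rightarrow> 'b \<Rightarrow> 'b) \<Rightarrow> 'b set \<Rightarrow> bool" where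
  "completely_regular_on mult A \<longleftrightarrow> (\<forall>a\<in>A. \<exists>G. G \<subseteq> A \<and> a \<in> G \<and> subgroup_in mult G)"

text \<open>Simple: the only ideal is A itself, i.e. b \<in> A^1 a A^1 for all a, b.\<close>
definition simple_on :: "('b \<Rightarrow> 'b \<Rightarrow> 'b) \<Rightarrow> 'b set \<Rightarrow> bool" where
  "simple_on mult A \<longleftrightarrow> (\<forall>a\<in>A. \<forall>b\<in>A.
      b = a \<or> (\<exists>x\<in>A. b = mult x a) \<or> (\<exists>y\<in>A. b = mult a y) \<or>
      (\<exists>x\<in>A. \<exists>y\<in>A. b = mult (mult x a) y))"

definition primitive_idem_in :: "('b \<Rightarrow> 'b \<Rightarrow> 'b) \<Rightarrow> 'b set \<Rightarrow> 'b \<Rightarrow> bool" where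
  "primitive_idem_in mult A e \<longleftrightarrow> idem_in mult A e \<and>
     (\<forall>f. idem_in mult A f \<and> mult e f = f \<and> mult f e = f \<longrightarrow> f = e)"

definition completely_simple_subsemigroup :: "('b \<Rightarrow> 'b \<Rightarrow> 'b) \<Rightarrow> 'b set \<Rightarrow> bool" where
  "completely_simple_subsemigroup mult A \<longleftrightarrow> closed_in mult A \<and> simple_on mult A \<and>
     (\<exists>e. primitive_idem_in mult A e)"

definition gen_subsemigroup :: "('b \<Rightarrow> 'b \<Rightarrow> 'b) \<Rightarrow> 'b set \<Rightarrow> 'b set" where
  "gen_subsemigroup mult X = \<Inter>{B. X \<subseteq> B \<and> closed_in mult B}"

definition locally_inverse :: "'a::semigroup_mult itself \<Rightarrow> bool" where
  "locally_inverse _ \<longleftrightarrow> regular_on ((*) :: 'a \<Rightarrow> 'a \<Rightarrow> 'a) UNIV \<and>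
     (\<forall>e::'a. e * e = e \<longrightarrow> inverse_on (*) {e * s * e | s. True})"

definition E_solid :: "'a::semigroup_mult itself \<Rightarrow> bool" where
  "E_solid _ \<longleftrightarrow> completely_regular_on ((*) :: 'a \<Rightarrow> 'a \<Rightarrow> 'a)
      (gen_subsemigroup (*) {e::'a. e * e = e})"

definition congruence :: "('a::semigroup_mult \<times> 'a) set \<Rightarrow> bool" where
  "congruence \<rho> \<longleftrightarrow> equiv UNIV \<rho> \<and>
     (\<forall>a b c. (a, b) \<in> \<rho> \<longrightarrow> (c * a, c * b) \<in> \<rho> \<and> (a * c, b * c) \<in> \<rho>)"

definition qmult :: "('a::semigroup_mult \<times> 'a) set \<Rightarrow> 'a set \<Rightarrow> 'a set \<Rightarrow> 'a set" where
  "qmult \<rho> \<alpha> \<beta> = \<rho> `` {a * b | a b. a \<in> \<alpha> \<and> b \<in> \<beta>}"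

definition inverse_congruence :: "('a::semigroup_mult \<times> 'a) set \<Rightarrow> bool" where
  "inverse_congruence \<rho> \<longleftrightarrow> congruence \<rho> \<and> inverse_on (qmult \<rho>) (UNIV // \<rho>)"

end

theory Submission
  imports Defs
begin

lemma idem_comm:
  assumes assoc: "\<And>a b c. a\<in>A \<Longrightarrow> b\<in>A \<Longrightarrow> c\<in>A \<Longrightarrow> m (m a b) c = m a (m b c)"
  and cl: "closed_in m A" and inv: "inverse_on m A"
  and e: "e\<in>A" "m e e = e" and f: "f\<in>A" "m f f = f"
  shows "m e f = m f e"
proof -
  have C: "\<And>a b. a\<in>A \<Longrightarrow> b\<in>A \<Longrightarrow> m a b \<in> A" using cl by (auto simp: closed_in_def)
  have ee: "\<And>z. z\<in>A \<Longrightarrow> m e (m e z) = m e z" by (metis assoc e)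
  have ff: "\<And>z. z\<in>A \<Longrightarrow> m f (m f z) = m f z" by (metis assoc f)
  have key: "\<And>e f. e\<in>A \<Longrightarrow> m e e = e \<Longrightarrow> f\<in>A \<Longrightarrow> m f f = f \<Longrightarrow> m (m e f) (m e f) = m e f"
  proof -
    fix e f assume e: "e\<in>A" "m e e = e" and f: "f\<in>A" "m f f = f"
    have ee: "\<And>z. z\<in>A \<Longrightarrow> m e (m e z) = m e z" by (metis assoc e)
    have ff: "\<And>z. z\<in>A \<Longrightarrow> m f (m f z) = m f z" by (metis assoc f)
    define p where "p = m e f"
    have pA: "p \<in> A" using C e f p_def by auto
    obtain x where x: "x\<in>A" "m (m p x) p = p" "m (m x p) x = x"
      and u: "\<And>y. y\<in>A \<Longrightarrow> m (m p y) p = p \<Longrightarrow> m (m y p) y = y \<Longrightarrow> y = x"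
      using inv pA unfolding inverse_on_def by metis
    define y where "y = m f (m x e)"
    have yA: "y\<in>A" using C x e f y_def by auto
    have x2: "m e (m f (m x (m e f))) = m e f" using x(2) by (simp add: p_def assoc C x e f)
    have x3: "m x (m e (m f x)) = x" using x(3) by (simp add: p_def assoc C x e f)
    have x3': "\<And>z. z\<in>A \<Longrightarrow> m x (m e (m f (m x z))) = m x z"
    proof -
      fix z assume z: "z\<in>A"
      have "m x (m e (m f (m x z))) = m (m x (m e (m f x))) z" by (simp add: assoc C x e f z)
      then show "m x (m e (m f (m x z))) = m x z" using x3 by simp
    qed
    have "m (m p y) p = p" using x2 by (simp add: p_def y_def assoc C x e f ee ff)
    moreover have "m (m y p) y = y"
      using x3' e by (simp add: p_def y_def assoc C x e f ee ff)
    ultimately have xy: "y = x" using u yA by blast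
    have xx: "m x x = x" 
    proof -
      have "m y y = m f (m (m x (m e (m f x))) e)" by (simp add: y_def assoc C x e f)
      also have "\<dots> = y" using x3 by (simp add: y_def)
      finally show ?thesis using xy by simp
    qed
    obtain z where "z\<in>A"
      and u2: "\<And>y. y\<in>A \<Longrightarrow> m (m x y) x = x \<Longrightarrow> m (m y x) y = y \<Longrightarrow> y = z"
      using inv x(1) unfolding inverse_on_def by metis
    have "x = z" by (rule u2) (use x xx in simp_all)
    moreover have "p = z" by (rule u2) (use x pA in \<open>simp_all add: assoc C\<close>)
    ultimately have "p = x" by simp
    then show "m p p = p" using \<open>p = x\<close> xx by simp
  qed
  have p: "m (m e f) (m e f) = m e f" using key e f by blast
  have q: "m (m f e) (m f e) = m f e" using key e f by blast
  obtain x where x: "x\<in>A" 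
      and u: "\<And>y. y\<in>A \<Longrightarrow> m (m (m e f) y) (m e f) = m e f \<Longrightarrow> m (m y (m e f)) y = y \<Longrightarrow> y = x"
      using inv C e f unfolding inverse_on_def by metis
  have p2: "m e (m f (m e f)) = m e f" using p by (simp add: assoc C e f)
  have q2: "m f (m e (m f e)) = m f e" using q by (simp add: assoc C e f)
  have "m e f = x" by (rule u) (use p e f C in \<open>simp_all add: assoc\<close>)
  moreover have "m f e = x" by (rule u) (use p2 q2 e f C in \<open>simp_all add: assoc ee ff\<close>)
  ultimately show ?thesis by simp
qed

lemma prim_transfer:
  fixes A :: "'a::semigroup_mult set"
  assumes cl: "closed_in (*) A" and pe: "primitive_idem_in (*) A e"
   and a: "a\<in>A" "b\<in>A" "a*b = e" "e*a = a" "b*e = b"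
  shows "primitive_idem_in (*) A (b*a)"
proof -
  have C: "\<And>x y. x\<in>A \<Longrightarrow> y\<in>A \<Longrightarrow> x*y \<in> A" using cl by (auto simp: closed_in_def)
  have ba: "b*a \<in> A" using C a by auto
  have idem: "b*a*(b*a) = b*a" by (metis a(3,5) mult.assoc)
  have "w = b*a" if w: "w\<in>A" "w*w=w" "b*a*w = w" "w*(b*a) = w" for w
  proof -
    have awb: "a*w*b \<in> A" using C w a by auto
    have "a*w*b*(a*w*b) = a*w*b" by (metis mult.assoc w(2) w(3))
    moreover have "e*(a*w*b) = a*w*b" "a*w*b*e = a*w*b" by (metis a(4,5) mult.assoc)+
    ultimately have "a*w*b = e" using pe awb unfolding primitive_idem_in_def idem_in_def by blast
    have "w = b*a*w*(b*a)" using w by (simp add: mult.assoc)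
    also have "\<dots> = b*(a*w*b)*a" by (simp add: mult.assoc)
    also have "\<dots> = b*a" using \<open>a*w*b = e\<close> a(5) by simp
    finally show ?thesis .
  qed
  then show ?thesis using ba idem unfolding primitive_idem_in_def idem_in_def by blast
qed

lemma simple_pad:
  fixes A :: "'a::semigroup_mult set"
  assumes "simple_on (*) A" "a\<in>A" "b\<in>A" "a*a = a"
  shows "\<exists>x\<in>A. \<exists>y\<in>A. b = x*a*y"
proof -
  have "b = a \<or> (\<exists>x\<in>A. b = x*a) \<or> (\<exists>y\<in>A. b = a*y) \<or> (\<exists>x\<in>A. \<exists>y\<in>A. b = x*a*y)"
    using assms unfolding simple_on_def by blast
  then show ?thesis
  proof (elim disjE bexE)
    assume "b = a" then show ?thesis using assms by (metis)
  next
    fix x assume "x\<in>A" "b = x*a" then show ?thesis using assms by (metis mult.assoc)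
  next
    fix y assume "y\<in>A" "b = a*y" then show ?thesis using assms by (metis mult.assoc)
  qed blast
qed

lemma all_prim:
  fixes A :: "'a::semigroup_mult set"
  assumes cl: "closed_in (*) A" and sim: "simple_on (*) A" and pe: "primitive_idem_in (*) A e0"
   and f: "f\<in>A" "f*f = f"
  shows "primitive_idem_in (*) A f"
proof -
  have C: "\<And>x y. x\<in>A \<Longrightarrow> y\<in>A \<Longrightarrow> x*y \<in> A" using cl by (auto simp: closed_in_def)
  have e0: "e0\<in>A" "e0*e0 = e0" using pe by (auto simp: primitive_idem_in_def idem_in_def)
  obtain x y where xy: "x\<in>A" "y\<in>A" "e0 = x*f*y" using simple_pad[OF sim f(1) e0(1) f(2)] by blast
  define a1 where "a1 = e0*x*f"
  define b1 where "b1 = f*y*e0"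
  have "a1*b1 = e0*(x*f*y)*e0" unfolding a1_def b1_def by (metis f(2) mult.assoc)
  then have ab1: "a1*b1 = e0" using xy e0 by simp
  have "e0*a1 = a1" "b1*e0 = b1" unfolding a1_def b1_def by (metis e0(2) mult.assoc)+
  then have pg: "primitive_idem_in (*) A (b1*a1)"
    using prim_transfer[OF cl pe _ _ ab1] C xy e0 f unfolding a1_def b1_def by blast
  define g where "g = b1*a1"
  have gA: "g\<in>A" "g*g = g" using pg unfolding g_def primitive_idem_in_def idem_in_def by auto
  have fg: "f*g = g" "g*f = g" unfolding g_def a1_def b1_def by (metis f(2) mult.assoc)+
  obtain x' y' where xy': "x'\<in>A" "y'\<in>A" "f = x'*g*y'" using simple_pad[OF sim gA(1) f(1) gA(2)] by blast
  define a where "a = f*x'*g"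
  define b where "b = g*y'*f"
  have "a*b = f*(x'*g*y')*f" unfolding a_def b_def by (metis gA(2) mult.assoc)
  then have ab: "a*b = f" using xy' f by simp
  have aA: "a\<in>A" "b\<in>A" unfolding a_def b_def using C xy' f gA by auto
  have bf: "b*f = b" "g*b = b" "a*g = a" "f*a = a" unfolding a_def b_def by (metis f(2) gA(2) mult.assoc)+
  have "b*a*(b*a) = b*a" by (metis ab bf(1) mult.assoc)
  moreover have "g*(b*a) = b*a" "b*a*g = b*a" by (metis bf mult.assoc)+
  ultimately have ba: "b*a = g" using pg C aA unfolding g_def primitive_idem_in_def idem_in_def by blast
  have "b*g*a*(b*g*a) = b*g*(a*b)*g*a" by (simp add: mult.assoc)
  also have "\<dots> = b*g*a" using ab fg gA by (simp add: mult.assoc)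
  finally have i1: "b*g*a*(b*g*a) = b*g*a" .
  have i2: "g*(b*g*a) = b*g*a" "b*g*a*g = b*g*a" by (metis bf mult.assoc)+
  have "b*g*a \<in> A" using C aA gA by auto
  then have bga: "b*g*a = g" using pg i1 i2 unfolding g_def primitive_idem_in_def idem_in_def by blast
  have "f*g*f = a*(b*g*a)*b" unfolding ab[symmetric] by (simp add: mult.assoc)
  also have "\<dots> = a*(b*a)*b" using bga ba by simp
  also have "\<dots> = f" by (metis ab f(2) mult.assoc)
  finally have "f*g*f = f" .
  then have "f = g" using fg by simp
  then show ?thesis using pg g_def by simp
qed

lemma cong_equiv: "congruence \<rho> \<Longrightarrow> equiv UNIV \<rho>" by (simp add: congruence_def)

lemma cong_mult:
  assumes "congruence \<rho>" "(a,a')\<in>\<rho>" "(b,b')\<in>\<rho>" shows "(a*b, a'*b') \<in> \<rho>"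
proof -
  have "(a*b, a'*b) \<in> \<rho>" "(a'*b, a'*b') \<in> \<rho>" using assms unfolding congruence_def by blast+
  then show ?thesis using cong_equiv[OF assms(1)] unfolding equiv_def trans_def by blast
qed

lemma qmult_class:
  assumes c: "congruence \<rho>"
  shows "qmult \<rho> (\<rho>``{a}) (\<rho>``{b}) = \<rho>``{a*b}"
proof -
  have eq: "equiv UNIV \<rho>" using c by (rule cong_equiv)
  let ?P = "{x * y |x y. x \<in> \<rho> `` {a} \<and> y \<in> \<rho> `` {b}}"
  have "\<rho>``{p} = \<rho>``{a*b}" if "p \<in> ?P" for p
  proof -
    from that obtain x y where "p = x*y" "(a,x)\<in>\<rho>" "(b,y)\<in>\<rho>" by auto
    then have "(a*b, p) \<in> \<rho>" using cong_mult[OF c] by blast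
    then show ?thesis using equiv_class_eq[OF eq] by (metis eq equiv_class_eq_iff)
  qed
  moreover have "a*b \<in> ?P" using eq by (auto simp: equiv_def refl_on_def)
  ultimately show ?thesis unfolding qmult_def by blast
qed

lemma T_comm:
  assumes ic: "inverse_congruence \<rho>" and u: "(u*u,u)\<in>\<rho>" and v: "(v*v,v)\<in>\<rho>"
  shows "(u*v, v*u) \<in> \<rho>"
proof -
  have c: "congruence \<rho>" and inv: "inverse_on (qmult \<rho>) (UNIV//\<rho>)" using ic by (auto simp: inverse_congruence_def)
  have eq: "equiv UNIV \<rho>" using c by (rule cong_equiv)
  have Q: "\<And>a b. qmult \<rho> (\<rho>``{a}) (\<rho>``{b}) = \<rho>``{a*b}" using qmult_class[OF c] .
  have assoc: "qmult \<rho> (qmult \<rho> X Y) Z = qmult \<rho> X (qmult \<rho> Y Z)"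
    if "X \<in> UNIV//\<rho>" "Y \<in> UNIV//\<rho>" "Z \<in> UNIV//\<rho>" for X Y Z
    using that by (elim quotientE) (simp add: Q mult.assoc)
  have cl: "closed_in (qmult \<rho>) (UNIV//\<rho>)"
    unfolding closed_in_def by (auto elim!: quotientE simp: Q intro!: quotientI)
  have "qmult \<rho> (\<rho>``{u}) (\<rho>``{v}) = qmult \<rho> (\<rho>``{v}) (\<rho>``{u})"
    apply (rule idem_comm[OF assoc cl inv])
    using u v eq by (auto simp: Q quotientI equiv_class_eq)
  then have "\<rho>``{u*v} = \<rho>``{v*u}" by (simp add: Q)
  then show ?thesis using eq by (simp add: eq_equiv_class_iff)
qed

theorem lemma4p1:
  fixes \<rho> :: "('a::semigroup_mult \<times> 'a) set"
  assumes "E_solid TYPE('a)"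
    and "locally_inverse TYPE('a)"
    and "inverse_congruence \<rho>"
    and "\<forall>\<alpha>\<in>UNIV // \<rho>. qmult \<rho> \<alpha> \<alpha> = \<alpha> \<longrightarrow> completely_simple_subsemigroup (*) \<alpha>"
  shows "\<forall>\<alpha>\<in>UNIV // \<rho>. \<forall>\<beta>\<in>UNIV // \<rho>. npo (qmult \<rho>) (UNIV // \<rho>) \<beta> \<alpha> \<longrightarrow>
           (\<forall>s\<in>\<alpha>. \<exists>!t. t \<in> \<beta> \<and> npo (*) UNIV t s)"
proof (intro ballI impI)
  fix \<alpha> \<beta> s
  assume \<alpha>: "\<alpha> \<in> UNIV//\<rho>" and \<beta>: "\<beta> \<in> UNIV//\<rho>" and le: "npo (qmult \<rho>) (UNIV // \<rho>) \<beta> \<alpha>"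
    and s: "s \<in> \<alpha>"
  have ic: "inverse_congruence \<rho>" by fact
  have c: "congruence \<rho>" using ic by (simp add: inverse_congruence_def)
  have eq: "equiv UNIV \<rho>" using c by (rule cong_equiv)
  have Q: "\<And>a b. qmult \<rho> (\<rho>``{a}) (\<rho>``{b}) = \<rho>``{a*b}" using qmult_class[OF c] .
  have refl: "\<And>x. (x,x)\<in>\<rho>" using eq by (auto simp: equiv_def refl_on_def)
  have sym: "\<And>x y. (x,y)\<in>\<rho> \<Longrightarrow> (y,x)\<in>\<rho>" using eq by (auto simp: equiv_def sym_def)
  have trans: "\<And>x y z. (x,y)\<in>\<rho> \<Longrightarrow> (y,z)\<in>\<rho> \<Longrightarrow> (x,z)\<in>\<rho>" using eq by (auto simp: equiv_def trans_def)
  have M: "\<And>a a' b b'. (a,a')\<in>\<rho> \<Longrightarrow> (b,b')\<in>\<rho> \<Longrightarrow> (a*b, a'*b') \<in> \<rho>" using cong_mult[OF c] by blast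
  have reg: "\<And>a::'a. \<exists>x. a*x*a = a" using assms(2) by (auto simp: locally_inverse_def regular_on_def)
  have cls: "\<And>X x. X \<in> UNIV//\<rho> \<Longrightarrow> x \<in> X \<Longrightarrow> X = \<rho>``{x}"
    by (metis Image_singleton_iff eq equiv_class_eq quotientE)
  have \<alpha>s: "\<alpha> = \<rho>``{s}" using cls \<alpha> s by blast
  obtain \<epsilon> \<phi> where ep: "idem_in (qmult \<rho>) (UNIV//\<rho>) \<epsilon>" "idem_in (qmult \<rho>) (UNIV//\<rho>) \<phi>"
    "\<beta> = qmult \<rho> \<epsilon> \<alpha>" "\<beta> = qmult \<rho> \<alpha> \<phi>" using le unfolding npo_def by blast
  obtain g where g: "\<epsilon> = \<rho>``{g}" using ep(1) unfolding idem_in_def by (auto elim: quotientE)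
  obtain p where p: "\<phi> = \<rho>``{p}" using ep(2) unfolding idem_in_def by (auto elim: quotientE)
  have \<beta>1: "\<beta> = \<rho>``{g*s}" using ep(3) g \<alpha>s Q by simp
  have \<beta>2: "\<beta> = \<rho>``{s*p}" using ep(4) p \<alpha>s Q by simp
  have gg: "(g*g, g) \<in> \<rho>" using ep(1) g Q eq unfolding idem_in_def by (simp add: eq_equiv_class_iff)
  have gsp: "(g*s, s*p) \<in> \<rho>" using \<beta>1 \<beta>2 eq by (metis eq_equiv_class_iff UNIV_I)
  obtain y where y: "s*y*s = s" using reg by blast
  define s' where "s' = y*s*y"
  have ss's: "s*s'*s = s" unfolding s'_def using y by (simp add: mult.assoc)
  have s'ss': "s'*s*s' = s'" unfolding s'_def by (metis y mult.assoc)
  define e where "e = s*s'"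
  have ee: "e*e = e" unfolding e_def by (metis ss's mult.assoc)
  have ee': "\<And>z. e*(e*z) = e*z" by (metis ee mult.assoc)
  have es: "e*s = s" unfolding e_def using ss's by simp
  define B where "B = {e*u*e | u. True}"
  have Binv: "inverse_on (*) B" using assms(2) ee unfolding locally_inverse_def B_def by blast
  have Bcl: "closed_in (*) B" unfolding closed_in_def
  proof (intro ballI)
    fix a b assume "a\<in>B" "b\<in>B"
    then obtain u v where "a = e*u*e" "b = e*v*e" unfolding B_def by blast
    then have "a*b = e*(u*e*e*v)*e" by (simp add: mult.assoc)
    then show "a*b\<in>B" unfolding B_def by blast
  qed
  have Bmem: "x \<in> B" if "e*x = x" "x*e = x" for x
  proof -
    have "x = e*x*e" using that by (simp add: mult.assoc)
    then show ?thesis unfolding B_def by blast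
  qed
  have Bcomm: "\<And>h k. h \<in> B \<Longrightarrow> k \<in> B \<Longrightarrow> h*h = h \<Longrightarrow> k*k = k \<Longrightarrow> h*k = k*h"
    by (rule idem_comm[OF _ Bcl Binv]) (simp_all add: mult.assoc)
  have ex: "\<exists>t. t \<in> \<beta> \<and> npo (*) UNIV t s"
  proof -
    define a where "a = e*g*e"
    have eg: "(e*g, g*e) \<in> \<rho>" using T_comm[OF ic _ gg] ee refl by simp
    have "a*a = e*(g*e)*g*e" unfolding a_def by (simp add: mult.assoc ee')
    moreover have "(e*(g*e)*g*e, e*(e*g)*g*e) \<in> \<rho>" using M refl sym eg by meson
    moreover have "e*(e*g)*g*e = e*(g*g)*e" by (simp add: mult.assoc ee')
    moreover have "(e*(g*g)*e, a) \<in> \<rho>" unfolding a_def using M refl gg by meson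
    ultimately have aa: "(a*a, a) \<in> \<rho>" using trans by metis
    obtain z where z: "a*a*z*(a*a) = a*a" using reg by blast
    define x where "x = z*(a*a)*z"
    have x1: "x*(a*a)*x = x" unfolding x_def by (metis z mult.assoc)
    define f where "f = a*x*a"
    have ff: "f*f = f" unfolding f_def by (metis x1 mult.assoc)
    have ea: "e*a = a" "a*e = a" unfolding a_def by (simp_all add: mult.assoc ee ee')
    have ef: "e*f = f" "f*e = f" unfolding f_def using ea by (metis mult.assoc)+
    have "(f, a*a*x*(a*a)) \<in> \<rho>" unfolding f_def using M sym aa refl by meson
    moreover have "a*a*x*(a*a) = a*a"
    proof -
      have "a*a*x*(a*a) = (a*a*z*(a*a))*z*(a*a)" unfolding x_def by (simp add: mult.assoc)
      also have "\<dots> = a*a" using z by simp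
      finally show ?thesis .
    qed
    ultimately have fa: "(f, a) \<in> \<rho>" using trans aa by metis
    define t where "t = f*s"
    have "(t, a*s) \<in> \<rho>" unfolding t_def using M fa refl by blast
    moreover have "a*s = e*(g*s)" unfolding a_def using es by (simp add: mult.assoc)
    moreover have "(e*(g*s), e*(s*p)) \<in> \<rho>" using M refl gsp by blast
    moreover have "e*(s*p) = s*p" using es by (simp add: mult.assoc[symmetric])
    ultimately have "(s*p, t) \<in> \<rho>" using trans sym by metis
    then have "t \<in> \<beta>" using \<beta>2 by simp
    moreover have "npo (*) UNIV t s"
    proof -
      have "(s'*f*s)*(s'*f*s) = s'*f*(s*s')*f*s" by (simp add: mult.assoc)
      also have "\<dots> = s'*f*s" using ef ff e_def by (simp add: mult.assoc)
      finally have i: "(s'*f*s)*(s'*f*s) = s'*f*s" .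
      have "s*(s'*f*s) = e*f*s" unfolding e_def by (simp add: mult.assoc)
      then have "t = s*(s'*f*s)" unfolding t_def using ef by simp
      then show ?thesis unfolding npo_def idem_in_def using i ff t_def by blast
    qed
    ultimately show ?thesis by blast
  qed
  have un: "t1 = t2" if t1: "t1 \<in> \<beta> \<and> npo (*) UNIV t1 s" and t2: "t2 \<in> \<beta> \<and> npo (*) UNIV t2 s" for t1 t2
  proof -
    have H: "\<exists>h. h*h = h \<and> e*h = h \<and> h*e = h \<and> h*s = t \<and> h = t*s'" if nt: "npo (*) UNIV t s" for t
    proof -
      obtain e1 f1 where e1: "e1*e1 = e1" "f1*f1 = f1" "t = e1*s" "t = s*f1"
        using nt unfolding npo_def idem_in_def by blast
      define h where "h = t*s'"
      have h1: "h = e1*e" unfolding h_def e_def e1 by (simp add: mult.assoc)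
      have h2: "h = s*f1*s'" unfolding h_def e1(4) ..
      have es1: "e1*s = s*f1" using e1 by simp
      have "e1*(s*s'*s) = s*f1*s'*s" using es1 by (simp add: mult.assoc[symmetric])
      then have sf: "s*f1*s'*s = e1*s" using ss's by simp
      have "h*h = (s*f1*s'*s)*f1*s'" unfolding h2 by (simp add: mult.assoc)
      also have "\<dots> = e1*s*f1*s'" using sf by simp
      also have "\<dots> = s*(f1*f1)*s'" using es1 by (simp add: mult.assoc[symmetric])
      also have "\<dots> = h" using e1(2) h2 by simp
      finally have "h*h = h" .
      moreover have "e*h = h" unfolding h2 e_def using ss's by (metis mult.assoc)
      moreover have "h*e = h" unfolding h1 using ee by (simp add: mult.assoc)
      moreover have "h*s = t" unfolding h1 using es e1 by (simp add: mult.assoc)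
      ultimately show ?thesis using h_def by blast
    qed
    obtain h1 where h1: "h1*h1 = h1" "e*h1 = h1" "h1*e = h1" "h1*s = t1" "h1 = t1*s'" using H t1 by blast
    obtain h2 where h2: "h2*h2 = h2" "e*h2 = h2" "h2*e = h2" "h2*s = t2" "h2 = t2*s'" using H t2 by blast
    have "(t1, t2) \<in> \<rho>" using t1 t2 \<beta>1 trans sym by blast
    then have h12: "(h1, h2) \<in> \<rho>" using h1(5) h2(5) M refl by blast
    define \<gamma> where "\<gamma> = \<rho>``{h1}"
    have \<gamma>Q: "\<gamma> \<in> UNIV//\<rho>" unfolding \<gamma>_def by (rule quotientI) simp
    have "qmult \<rho> \<gamma> \<gamma> = \<gamma>" unfolding \<gamma>_def Q h1(1) ..
    then have cs: "completely_simple_subsemigroup (*) \<gamma>" using assms(4) \<gamma>Q by blast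
    then obtain e0 where cl: "closed_in (*) \<gamma>" and sim: "simple_on (*) \<gamma>" and e0: "primitive_idem_in (*) \<gamma> e0"
      unfolding completely_simple_subsemigroup_def by blast
    have m1: "h1 \<in> \<gamma>" "h2 \<in> \<gamma>" unfolding \<gamma>_def using refl h12 by auto
    have comm: "h1*h2 = h2*h1" using Bcomm Bmem h1 h2 by blast
    define k where "k = h1*h2"
    have kg: "k \<in> \<gamma>" using cl m1 unfolding k_def closed_in_def by blast
    have kk: "k*k = k" unfolding k_def by (metis comm h1(1) h2(1) mult.assoc)
    have p1: "primitive_idem_in (*) \<gamma> h1" using all_prim[OF cl sim e0 m1(1) h1(1)] .
    have p2: "primitive_idem_in (*) \<gamma> h2" using all_prim[OF cl sim e0 m1(2) h2(1)] .
    have "h1*k = k" "k*h1 = k" unfolding k_def by (metis comm h1(1) mult.assoc)+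
    then have "k = h1" using p1 kg kk unfolding primitive_idem_in_def idem_in_def by blast
    moreover have "h2*k = k" "k*h2 = k" unfolding k_def by (metis comm h2(1) mult.assoc)+
    then have "k = h2" using p2 kg kk unfolding primitive_idem_in_def idem_in_def by blast
    ultimately show "t1 = t2" using h1(4) h2(4) by simp
  qed
  show "\<exists>!t. t \<in> \<beta> \<and> npo (*) UNIV t s" using ex un by blast
qed

end
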